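(* Let $a\in \mathcal{A}$. Then the following are equivalent: (1) $a$ has a $w$-weighted core inverse. (2) $aw\in \mathcal{A}^{\#}$ and $waw$ has a $((aw)^{D}, ((wa)^{D})^* )$-inverse. In this case, $a^{\mathrm{core},w}=(waw)^{((aw)^{D},((wa)^D)^* )}$.
   Context: $\mathcal{A}$ is a complex Banach *-algebra with identity and $w\in\mathcal{A}$. The $w$-weighted core inverse of $a$ is the unique $x$ with $a(wx)^2=x$, $(wawx)^*=wawx$, $xw(aw)^2=aw$, denoted $a^{\mathrm{core},w}$. $\mathcal{A}^{\#}$ is the set of group invertible elements; $b^D$ denotes the Drazin inverse. For $a,b,c\in\mathcal{A}$, the $(b,c)$-inverse of $a$ is the unique $x$ (if it exists) with $xab=b$, $cax=c$, $x\in b\mathcal{A}x\cap x\mathcal{A}c$, denoted $a^{(b,c)}$. *)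

theory Defs
  imports "HOL-Analysis.Analysis"
begin

class cbanach_star_algebra = real_normed_algebra_1 + banach +
  fixes scaleC :: "complex \<Rightarrow> 'a \<Rightarrow> 'a"
    and invol :: "'a \<Rightarrow> 'a"
  assumes scaleC_of_real: "scaleC (complex_of_real r) x = scaleR r x"
    and scaleC_add_right: "scaleC c (x + y) = scaleC c x + scaleC c y"
    and scaleC_add_left: "scaleC (c + d) x = scaleC c x + scaleC d x"
    and scaleC_scaleC: "scaleC c (scaleC d x) = scaleC (c * d) x"
    and scaleC_one: "scaleC 1 x = x"
    and norm_scaleC: "norm (scaleC c x) = cmod c * norm x"
    and mult_scaleC_left: "scaleC c x * y = scaleC c (x * y)"
    and mult_scaleC_right: "x * scaleC c y = scaleC c (x * y)"
    and invol_invol: "invol (invol x) = x"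
    and invol_add: "invol (x + y) = invol x + invol y"
    and invol_mult: "invol (x * y) = invol y * invol x"
    and invol_scaleC: "invol (scaleC c x) = scaleC (cnj c) (invol x)"

definition group_invertible :: "'a::ring_1 \<Rightarrow> bool" where
  "group_invertible a \<longleftrightarrow> (\<exists>x. a * x * a = a \<and> x * a * x = x \<and> a * x = x * a)"

definition is_drazin_inverse :: "'a::ring_1 \<Rightarrow> 'a \<Rightarrow> bool" where
  "is_drazin_inverse b x \<longleftrightarrow> x * b * x = x \<and> b * x = x * b \<and> (\<exists>k::nat. b ^ (k + 1) * x = b ^ k)"

definition drazin :: "'a::ring_1 \<Rightarrow> 'a" where
  "drazin b = (THE x. is_drazin_inverse b x)"

definition is_wcore_inverse :: "'a::cbanach_star_algebra \<Rightarrow> 'a \<Rightarrow> 'a \<Rightarrow> bool" where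
  "is_wcore_inverse a w x \<longleftrightarrow>
     a * (w * x)^2 = x \<and> invol (w * a * w * x) = w * a * w * x \<and> x * w * (a * w)^2 = a * w"

definition has_wcore_inverse :: "'a::cbanach_star_algebra \<Rightarrow> 'a \<Rightarrow> bool" where
  "has_wcore_inverse a w \<longleftrightarrow> (\<exists>x. is_wcore_inverse a w x)"

definition wcore_inv :: "'a::cbanach_star_algebra \<Rightarrow> 'a \<Rightarrow> 'a" where
  "wcore_inv a w = (THE x. is_wcore_inverse a w x)"

definition is_bc_inverse :: "'a::ring_1 \<Rightarrow> 'a \<Rightarrow> 'a \<Rightarrow> 'a \<Rightarrow> bool" where
  "is_bc_inverse a b c x \<longleftrightarrow> x * a * b = b \<and> c * a * x = c \<and>
     (\<exists>y. x = b * y * x) \<and> (\<exists>z. x = x * z * c)"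

definition bc_inv :: "'a::ring_1 \<Rightarrow> 'a \<Rightarrow> 'a \<Rightarrow> 'a" where
  "bc_inv a b c = (THE x. is_bc_inverse a b c x)"

end

theory Submission imports Defs begin

lemma comm_pow: fixes b x :: "'a::ring_1"
  assumes "b*x = x*b" shows "x*b^n = b^n*x"
  by (induction n) (simp_all add: assms mult.assoc[symmetric], metis assms mult.assoc)

lemma drazin_pow: fixes b x :: "'a::ring_1"
  assumes "x*b*x = x" "b*x = x*b" shows "x^(n+1)*b^n = x"
proof (induction n)
  case 0 then show ?case by simp
next
  case (Suc n)
  have e1: "x^(Suc n+1) = x^(n+1)*x" by (subst power_Suc2[symmetric]) simp
  have e2: "b^(Suc n) = b^n*b" by (rule power_Suc2)
  have c: "x*b^n = b^n*x" using comm_pow[OF assms(2)] .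
  have "x^(Suc n+1)*b^(Suc n) = x^(n+1)*(x*b^n)*b" by (simp only: e1 e2 mult.assoc)
  also have "\<dots> = x^(n+1)*b^n*(x*b)" by (simp only: c mult.assoc)
  also have "\<dots> = x" using Suc assms by (metis mult.assoc)
  finally show ?case .
qed

lemma drazin_pow2: fixes b x :: "'a::ring_1"
  assumes "x*b*x = x" "b*x = x*b" shows "b^n*x^(n+1) = x"
proof -
  have "x^(n+1)*b^n = b^n*x^(n+1)"
  proof (induction n)
    case 0 then show ?case by simp
  next
    case (Suc n)
    have c: "x*b^m = b^m*x" for m using comm_pow[OF assms(2)] .
    have c2: "x^m*b^k = b^k*x^m" for m k
      by (induction m) (simp_all, metis c mult.assoc power_Suc)
    show ?case by (rule c2)
  qed
  then show ?thesis using drazin_pow[OF assms] by simp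
qed

lemma drazin_mono: fixes b x :: "'a::ring_1"
  assumes "b^(k+1)*x = b^k" "k \<le> n" shows "b^(n+1)*x = b^n"
  using assms(2)
proof (induction n rule: dec_induct)
  case base then show ?case using assms(1) .
next
  case (step n)
  have "b^(Suc n+1)*x = b*(b^(n+1)*x)" by (simp add: mult.assoc)
  then show ?case using step by simp
qed

lemma drazin_unique: fixes b x y :: "'a::ring_1"
  assumes "is_drazin_inverse b x" "is_drazin_inverse b y" shows "x = y"
proof -
  from assms obtain k l where x: "x*b*x = x" "b*x = x*b" "b^(k+1)*x = b^k"
    and y: "y*b*y = y" "b*y = y*b" "b^(l+1)*y = b^l"
    unfolding is_drazin_inverse_def by blast
  define m where "m = max k l"
  have xm: "b^(m+1)*x = b^m" using drazin_mono[OF x(3)] m_def by simp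
  have ym: "b^(m+1)*y = b^m" using drazin_mono[OF y(3)] m_def by simp
  have "x = x^(m+1)*b^m" using drazin_pow[OF x(1,2)] by simp
  also have "\<dots> = x^(m+1)*(b^(m+1)*y)" using ym by simp
  also have "\<dots> = x^(m+1)*b^m*(b*y)" by (simp only: power_Suc2 mult.assoc Suc_eq_plus1[symmetric])
  also have "\<dots> = x*(b*y)" using drazin_pow[OF x(1,2)] by simp
  finally have 1: "x = x*b*y" by (simp add: mult.assoc)
  have xb: "x*b^(m+1) = b^m" using xm comm_pow[OF x(2), of "m+1"] by simp
  have "y = b^m*y^(m+1)" using drazin_pow2[OF y(1,2)] by simp
  also have "\<dots> = x*b^(m+1)*y^(m+1)" using xb by simp
  also have "\<dots> = x*b*(b^m*y^(m+1))" by (simp only: power_Suc mult.assoc Suc_eq_plus1[symmetric])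
  also have "\<dots> = x*b*y" using drazin_pow2[OF y(1,2)] by simp
  finally show ?thesis using 1 by simp
qed

lemma drazin_eq: fixes b x :: "'a::ring_1"
  assumes "is_drazin_inverse b x" shows "drazin b = x"
  unfolding drazin_def using assms drazin_unique by blast

lemma bc_unique: fixes a b c x y :: "'a::ring_1"
  assumes "is_bc_inverse a b c x" "is_bc_inverse a b c y" shows "x = y"
proof -
  from assms obtain r1 t1 where x: "x*a*b = b" "c*a*x = c" "x = b*r1*x"
    and y: "y*a*b = b" "c*a*y = c" "y = y*t1*c" unfolding is_bc_inverse_def by blast
  have "x = y*a*b*r1*x" using x(3) y(1) by simp
  also have "\<dots> = y*a*x" using x(3) by (metis mult.assoc)
  finally have 1: "x = y*a*x" .
  have "y = y*t1*c*a*x" using y(3) x(2) by (metis mult.assoc)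
  also have "\<dots> = y*a*x" using y(3) by (metis mult.assoc)
  finally show ?thesis using 1 by simp
qed

lemma bc_eq: fixes a b c x :: "'a::ring_1"
  assumes "is_bc_inverse a b c x" shows "bc_inv a b c = x"
  unfolding bc_inv_def using assms bc_unique by blast


lemma grp_facts: fixes p g :: "'a::ring_1"
  assumes "p*g*p = p" "g*p*g = g" "p*g = g*p"
  shows "g*g*p = g" "p*g*g = g" "g*p*p = p" "p*p*g = p"
  using assms by (metis mult.assoc)+

lemma grp_from: fixes p u q1 :: "'a::ring_1"
  assumes "p = q1*p*p" "p = p*p*u" shows "group_invertible p"
proof -
  have e: "p*u = q1*p" using assms by (metis mult.assoc)
  define g where "g = p*u*u"
  have g2: "g = q1*q1*p" using e unfolding g_def by (metis mult.assoc)
  have pg: "p*g = p*u" unfolding g_def using assms by (metis mult.assoc)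
  have gp: "g*p = q1*p" using g2 assms by (metis mult.assoc)
  have "p*g*p = p" using pg e assms by (metis mult.assoc)
  moreover have "g*p*g = g" using gp g_def assms e by (metis mult.assoc)
  moreover have "p*g = g*p" using pg gp e by simp
  ultimately show ?thesis unfolding group_invertible_def by blast
qed

lemma drazin_aw: fixes p g :: "'a::ring_1"
  assumes "p*g*p = p" "g*p*g = g" "p*g = g*p" shows "drazin p = g"
proof (rule drazin_eq)
  show "is_drazin_inverse p g" unfolding is_drazin_inverse_def
    using assms by (intro conjI exI[of _ 1]) (simp_all, metis mult.assoc)
qed

lemma drazin_wa: fixes a w g :: "'a::ring_1"
  assumes "a*w*g*(a*w) = a*w" "g*(a*w)*g = g" "a*w*g = g*(a*w)" shows "drazin (w*a) = w*g*g*a"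
proof (rule drazin_eq)
  note f = grp_facts[OF assms]
  have 1: "w*g*g*a*(w*a) = w*g*a" using f(1) by (metis mult.assoc)
  have 2: "w*a*(w*g*g*a) = w*g*a" using f(2) by (metis mult.assoc)
  have 3: "w*g*g*a*(w*a)*(w*g*g*a) = w*g*g*a" using 1 f(2) by (metis mult.assoc)
  have 4: "(w*a)^(2+1)*(w*g*g*a) = (w*a)^2"
  proof -
    have "(w*a)^(2+1)*(w*g*g*a) = w*a*(w*a)*(w*a*(w*g*g*a))" by (simp add: numeral_3_eq_3 power2_eq_square mult.assoc)
    also have "\<dots> = w*(a*w*(a*w*g))*a" using 2 by (simp add: mult.assoc)
    also have "\<dots> = w*(a*w)*a" using f(4) assms(1) by (metis mult.assoc)
    finally show ?thesis by (simp add: power2_eq_square mult.assoc)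
  qed
  show "is_drazin_inverse (w*a) (w*g*g*a)" unfolding is_drazin_inverse_def
    using 1 2 3 4 by (metis exI)
qed


lemma wcore_grp: fixes a w x :: "'a::cbanach_star_algebra"
  assumes "is_wcore_inverse a w x" shows "group_invertible (a*w)"
proof -
  from assms have X1: "a*w*x*w*x = x" and X3: "x*w*(a*w)*(a*w) = a*w"
    unfolding is_wcore_inverse_def by (simp_all add: power2_eq_square mult.assoc)
  have x2: "x = a*w*(a*w)*(x*w*x*w*x)" using X1 by (metis (no_types) mult.assoc)
  have "a*w = a*w*(a*w)*(x*w*x*w*x*w*(a*w)*(a*w))" using x2 X3 by (metis (no_types) mult.assoc)
  then show ?thesis using grp_from X3 by (metis (no_types) mult.assoc)
qed

lemma wcore_bc: fixes a w x g :: "'a::cbanach_star_algebra"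
  assumes "is_wcore_inverse a w x"
    and G: "a*w*g*(a*w) = a*w" "g*(a*w)*g = g" "a*w*g = g*(a*w)"
  shows "is_bc_inverse (w*a*w) g (invol (w*g*g*a)) x"
proof -
  note f = grp_facts[OF G]
  from assms have X1: "a*w*x*w*x = x" and X2: "invol (w*a*w*x) = w*a*w*x"
     and X3: "x*w*(a*w)*(a*w) = a*w"
    unfolding is_wcore_inverse_def by (simp_all add: power2_eq_square mult.assoc)
  have D1: "x*w*(a*w) = a*w*g" using X3 f(4) by (metis (no_types) mult.assoc)
  have D2: "x*w*(a*w)*g = g" using D1 f(2) by (metis (no_types) mult.assoc)
  have D4: "a*w*x*w*g = g"
  proof -
    have "a*w*x*w*g = a*w*(x*w*(a*w))*g*g" using f(2) by (metis (no_types) mult.assoc)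
    also have "\<dots> = g" using D1 f(4) f(2) by (metis (no_types) mult.assoc)
    finally show ?thesis .
  qed
  have bc1: "x*(w*a*w)*g = g" using D2 by (simp add: mult.assoc)
  have h1: "w*a*w*x*(w*g*g*a) = w*g*g*a" using D4 by (metis (no_types) mult.assoc)
  have bc2: "invol (w*g*g*a)*(w*a*w)*x = invol (w*g*g*a)"
  proof -
    have "invol (w*g*g*a)*(w*a*w)*x = invol (w*g*g*a)*invol (w*a*w*x)"
      using X2 by (simp add: mult.assoc)
    also have "\<dots> = invol (w*a*w*x*(w*g*g*a))" by (simp add: invol_mult)
    finally show ?thesis using h1 by simp
  qed
  have bc3: "x = g*(a*w*(a*w)*x*w)*x" using X1 f(3) by (metis (no_types) mult.assoc)
  have xx: "x = x*(w*a*w*x)"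
  proof -
    have "x*(w*a*w*x) = x*w*(a*w)*x" by (simp add: mult.assoc)
    also have "\<dots> = a*w*g*(a*w*x*w*x)" using D1 X1 by (metis (no_types) mult.assoc)
    also have "\<dots> = x" using X1 G(1) by (metis (no_types) mult.assoc)
    finally show ?thesis by simp
  qed
  have wh: "w*a*w*x = w*g*g*a*(w*a*w*a*w*x)"
  proof -
    have "g*g*(a*w)*(a*w)*(a*w) = a*w" using f(1) f(3) by (metis (no_types) mult.assoc)
    then show ?thesis by (metis (no_types) mult.assoc)
  qed
  have bc4: "x = x*invol (w*a*w*a*w*x)*invol (w*g*g*a)"
  proof -
    have "x = x*invol (w*a*w*x)" using xx X2 by simp
    also have "\<dots> = x*invol (w*a*w*a*w*x)*invol (w*g*g*a)"
      using wh by (metis invol_mult mult.assoc)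
    finally show ?thesis .
  qed
  show ?thesis unfolding is_bc_inverse_def using bc1 bc2 bc3 bc4 by blast
qed

lemma bc_wcore: fixes a w y g :: "'a::cbanach_star_algebra"
  assumes "is_bc_inverse (w*a*w) g (invol (w*g*g*a)) y"
    and G: "a*w*g*(a*w) = a*w" "g*(a*w)*g = g" "a*w*g = g*(a*w)"
  shows "is_wcore_inverse a w y"
proof -
  note f = grp_facts[OF G]
  from assms obtain u1 q1 where Y1: "y*(w*a*w)*g = g" and Y2: "invol (w*g*g*a)*(w*a*w)*y = invol (w*g*g*a)"
    and Y3: "y = g*u1*y" and Y4: "y = y*q1*invol (w*g*g*a)"
    unfolding is_bc_inverse_def by blast
  have c3: "y*w*(a*w)*(a*w) = a*w"
  proof -
    have "y*w*(a*w)*(a*w) = y*(w*a*w)*g*(a*w)*(a*w)" using f(3) by (metis (no_types) mult.assoc)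
    then show ?thesis using Y1 f(3) by (metis (no_types) mult.assoc)
  qed
  have ywg: "y*w*g = g*g"
  proof -
    have "y*w*g = y*(w*a*w)*g*g" using f(2) by (metis (no_types) mult.assoc)
    then show ?thesis using Y1 by simp
  qed
  have c1: "a*w*y*w*y = y"
  proof -
    have "a*w*y*w*y = a*w*(y*w*g)*u1*y" using Y3 by (metis (no_types) mult.assoc)
    also have "\<dots> = g*u1*y" using ywg f(2) by (metis (no_types) mult.assoc)
    finally show ?thesis using Y3 by simp
  qed
  define q where "q = w*a*w*y"
  have yq: "y*w*a*w*y = y"
  proof -
    have "y*w*a*w*y = y*(w*a*w)*g*u1*y" using Y3 by (metis (no_types) mult.assoc)
    then show ?thesis using Y1 Y3 by (metis (no_types) mult.assoc)
  qed
  have qh: "q = w*g*g*a*(w*a*w*a*w*y)"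
  proof -
    have "g*g*(a*w)*(a*w)*(a*w) = a*w" using f(1) f(3) by (metis (no_types) mult.assoc)
    then show ?thesis unfolding q_def by (metis (no_types) mult.assoc)
  qed
  have q2: "q = w*g*g*a*(w*a*w*a*w*y*q1)*invol (w*g*g*a)"
  proof -
    have "q = w*a*w*(y*q1*invol (w*g*g*a))" unfolding q_def using Y4 by simp
    also have "\<dots> = q*q1*invol (w*g*g*a)" unfolding q_def by (simp add: mult.assoc)
    finally show ?thesis using qh by (metis (no_types) mult.assoc)
  qed
  have iqh: "invol q*(w*g*g*a) = w*g*g*a"
  proof -
    have "invol (invol (w*g*g*a)*q) = invol (invol (w*g*g*a))" using Y2 unfolding q_def by (simp add: mult.assoc)
    then show ?thesis by (simp add: invol_mult invol_invol)
  qed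
  have qq: "invol q*q = q" using q2 iqh by (metis (no_types) mult.assoc)
  have "invol q = q"
  proof -
    have "invol q = invol (invol q*q)" using qq by simp
    also have "\<dots> = invol q*q" by (simp add: invol_mult invol_invol)
    finally show ?thesis using qq by simp
  qed
  then show ?thesis unfolding is_wcore_inverse_def q_def using c1 c3
    by (simp add: power2_eq_square mult.assoc)
qed


theorem theorem2p7:
  fixes a w :: "'a::cbanach_star_algebra"
  shows "(has_wcore_inverse a w \<longleftrightarrow>
           (group_invertible (a * w) \<and>
            (\<exists>x. is_bc_inverse (w * a * w) (drazin (a * w)) (invol (drazin (w * a))) x))) \<and>
         (has_wcore_inverse a w \<longrightarrow>
           wcore_inv a w = bc_inv (w * a * w) (drazin (a * w)) (invol (drazin (w * a))))"
proof -
  have main: "group_invertible (a*w) \<and> is_bc_inverse (w * a * w) (drazin (a * w)) (invol (drazin (w * a))) x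
     \<and> wcore_inv a w = x" if wx: "is_wcore_inverse a w x" for x
  proof -
    have gi: "group_invertible (a*w)" using wcore_grp[OF wx] .
    then obtain g where G: "a*w*g*(a*w) = a*w" "g*(a*w)*g = g" "a*w*g = g*(a*w)"
      unfolding group_invertible_def by blast
    have d1: "drazin (a*w) = g" using drazin_aw[OF G] .
    have d2: "drazin (w*a) = w*g*g*a" using drazin_wa[OF G] .
    have bc: "is_bc_inverse (w*a*w) g (invol (w*g*g*a)) x" using wcore_bc[OF wx G] .
    have "wcore_inv a w = x" unfolding wcore_inv_def
    proof (rule the_equality)
      show "is_wcore_inverse a w x" by fact
      fix y assume "is_wcore_inverse a w y"
      from wcore_bc[OF this G] bc show "y = x" by (rule bc_unique)
    qed
    then show ?thesis using gi bc d1 d2 by simp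
  qed
  have bwd: "has_wcore_inverse a w" if gi: "group_invertible (a*w)"
     and bc: "is_bc_inverse (w * a * w) (drazin (a * w)) (invol (drazin (w * a))) y" for y
  proof -
    from gi obtain g where G: "a*w*g*(a*w) = a*w" "g*(a*w)*g = g" "a*w*g = g*(a*w)"
      unfolding group_invertible_def by blast
    have d1: "drazin (a*w) = g" using drazin_aw[OF G] .
    have d2: "drazin (w*a) = w*g*g*a" using drazin_wa[OF G] .
    show ?thesis unfolding has_wcore_inverse_def using bc_wcore[OF _ G, of y] bc d1 d2 by auto
  qed
  have A: "has_wcore_inverse a w \<longleftrightarrow>
           (group_invertible (a * w) \<and>
            (\<exists>x. is_bc_inverse (w * a * w) (drazin (a * w)) (invol (drazin (w * a))) x))"
    using main bwd unfolding has_wcore_inverse_def by blast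
  have B: "has_wcore_inverse a w \<longrightarrow>
           wcore_inv a w = bc_inv (w * a * w) (drazin (a * w)) (invol (drazin (w * a)))"
    using main bc_eq unfolding has_wcore_inverse_def by metis
  show ?thesis using A B by blast
qed

end
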